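(* Every regular locally almost arcwise connected topological space is locally connected.
   Context: Two sets $A,B$ are joined by an arc in a set $S$ if there is a continuous $\gamma:[0,1]\to X$ with $\gamma([0,1])\subseteq S$, $\gamma(0)\in A$, $\gamma(1)\in B$. $X$ is locally almost arcwise connected at $x$ if for every neighborhood $V$ of $x$ there is a neighborhood $U\subseteq V$ of $x$ such that each pair of nonempty open subsets of $U$ can be joined by an arc in $\overline V$; locally almost arcwise connected means this holds at every point. *)

theory Defs
  imports "HOL-Analysis.Analysis"
begin

definition joined_by_arc_in :: "'a topology \<Rightarrow> 'a set \<Rightarrow> 'a set \<Rightarrow> 'a set \<Rightarrow> bool" where
  "joined_by_arc_in X S A B \<longleftrightarrow>
     (\<exists>g. pathin X g \<and> g ` {0..1} \<subseteq> S \<and> g 0 \<in> A \<and> g 1 \<in> B)"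

definition nbhd_of :: "'a topology \<Rightarrow> 'a \<Rightarrow> 'a set \<Rightarrow> bool" where
  "nbhd_of X x N \<longleftrightarrow> N \<subseteq> topspace X \<and> (\<exists>W. openin X W \<and> x \<in> W \<and> W \<subseteq> N)"

definition locally_almost_arcwise_connected_at :: "'a topology \<Rightarrow> 'a \<Rightarrow> bool" where
  "locally_almost_arcwise_connected_at X x \<longleftrightarrow>
     (\<forall>V. nbhd_of X x V \<longrightarrow>
        (\<exists>U. nbhd_of X x U \<and> U \<subseteq> V \<and>
           (\<forall>P Q. openin X P \<and> P \<noteq> {} \<and> P \<subseteq> U \<and>
                  openin X Q \<and> Q \<noteq> {} \<and> Q \<subseteq> U
                  \<longrightarrow> joined_by_arc_in X (X closure_of V) P Q)))"

definition locally_almost_arcwise_connected :: "'a topology \<Rightarrow> bool" where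
  "locally_almost_arcwise_connected X \<longleftrightarrow>
     (\<forall>x \<in> topspace X. locally_almost_arcwise_connected_at X x)"

end

theory Submission
  imports Defs
begin

lemma reg_closure_nbhd:
  assumes "regular_space X" "openin X V" "y \<in> V"
  obtains W where "openin X W" "y \<in> W" "X closure_of W \<subseteq> V"
proof -
  have "neighbourhood_base_of (closedin X) X"
    using assms(1) neighbourhood_base_of_closedin by blast
  then obtain U C where "openin X U" "closedin X C" "y \<in> U" "U \<subseteq> C" "C \<subseteq> V"
  proof -
    have "\<forall>W x. openin X W \<and> x \<in> W
          \<longrightarrow> (\<exists>U C. openin X U \<and> closedin X C \<and> x \<in> U \<and> U \<subseteq> C \<and> C \<subseteq> W)"
      using \<open>neighbourhood_base_of (closedin X) X\<close> unfolding neighbourhood_base_of .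
    then have "\<exists>U C. openin X U \<and> closedin X C \<and> y \<in> U \<and> U \<subseteq> C \<and> C \<subseteq> V"
      using assms(2,3) by simp
    then show ?thesis using that by blast
  qed
  then have "X closure_of U \<subseteq> V"
    by (meson closure_of_minimal order_trans)
  then show ?thesis using that \<open>openin X U\<close> \<open>y \<in> U\<close> by blast
qed

theorem mainTheorem12:
  fixes X :: "'a topology"
  assumes "regular_space X"
    and "locally_almost_arcwise_connected X"
  shows "locally_connected_space X"
  unfolding locally_connected_space
proof (intro allI impI)
  fix V x
  assume Vx: "openin X V \<and> x \<in> V"
  define Y where "Y = subtopology X V"
  have tY: "topspace Y = V"
    using Vx openin_subset[of X V] unfolding Y_def topspace_subtopology by blast
  define Q where "Q = quasi_component_of_set Y x"
  have QV: "Q \<subseteq> V" unfolding Q_def using quasi_component_of_subset_topspace[of Y x] tY by simp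
  have xQ: "x \<in> Q" using Vx tY Q_def by simp
  have "openin X Q"
  proof (subst openin_subopen, intro ballI)
    fix y assume yQ: "y \<in> Q"
    then have yV: "y \<in> V" using QV by blast
    obtain W where W: "openin X W" "y \<in> W" "X closure_of W \<subseteq> V"
      using reg_closure_nbhd[OF assms(1)] Vx yV by blast
    have "nbhd_of X y W" unfolding nbhd_of_def using W(1,2) openin_subset[of X W] by blast
    moreover have "y \<in> topspace X" using W(1,2) openin_subset[of X W] by blast
    moreover have "locally_almost_arcwise_connected_at X y"
      using assms(2) \<open>y \<in> topspace X\<close> unfolding locally_almost_arcwise_connected_def by blast
    ultimately obtain U where U: "nbhd_of X y U" "U \<subseteq> W"
      and J0: "\<forall>P R. openin X P \<and> P \<noteq> {} \<and> P \<subseteq> U \<and> openin X R \<and> R \<noteq> {}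
               \<and> R \<subseteq> U \<longrightarrow> joined_by_arc_in X (X closure_of W) P R"
      unfolding locally_almost_arcwise_connected_at_def by (elim allE[where x=W] impE) blast+
    have J: "joined_by_arc_in X (X closure_of W) P R"
      if "openin X P" "P \<noteq> {}" "P \<subseteq> U" "openin X R" "R \<noteq> {}" "R \<subseteq> U" for P R
      using J0 that by blast
    obtain U0 where U0: "openin X U0" "y \<in> U0" "U0 \<subseteq> U"
      using U(1) unfolding nbhd_of_def by blast
    have WV: "W \<subseteq> V" using W(1,3) closure_of_subset[of W X] openin_subset[of X W] by blast
    have "U0 \<subseteq> Q"
    proof
      fix z assume zU0: "z \<in> U0"
      have zV: "z \<in> V" using zU0 U0 U WV by blast
      have "quasi_component_of Y y z"
        unfolding quasi_component_of tY
      proof (intro conjI yV zV allI impI)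
        fix T assume T: "y \<in> T \<and> closedin Y T \<and> openin Y T"
        show "z \<in> T"
        proof (rule ccontr)
          assume zT: "z \<notin> T"
          have TX: "openin X T" using T Vx openin_trans_full[of X V T] unfolding Y_def by blast
          have "openin Y (topspace Y - T)" using T by blast
          then have cX: "openin X (V - T)" using tY Vx openin_trans_full[of X V "V - T"]
            unfolding Y_def by simp
          have "U0 - T = U0 \<inter> (V - T)" using U0 U WV by blast
          then have o2: "openin X (U0 - T)" using cX U0 by auto
          have o1: "openin X (U0 \<inter> T)" using TX U0 by auto
          have ne1: "U0 \<inter> T \<noteq> {}" using U0(2) T by blast
          have ne2: "U0 - T \<noteq> {}" using zU0 zT by blast
          have "joined_by_arc_in X (X closure_of W) (U0 \<inter> T) (U0 - T)"
            using J[OF o1 ne1 _ o2 ne2] U0(3) by blast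
          then obtain g where g: "pathin X g" "g ` {0..1} \<subseteq> X closure_of W"
            "g 0 \<in> U0 \<inter> T" "g 1 \<in> U0 - T"
            unfolding joined_by_arc_in_def by blast
          have "connectedin X (g ` {0..1})" using g connectedin_path_image by blast
          then have cY: "connectedin Y (g ` {0..1})"
            unfolding Y_def using g(2) W(3) connectedin_subtopology by blast
          have "g ` {0..1} \<subseteq> T \<or> disjnt (g ` {0..1}) T"
            using connectedin_clopen_cases[OF cY] T by blast
          moreover have "g 0 \<in> g ` {0..1}" "g 1 \<in> g ` {0..1}" by auto
          ultimately show False using g(3,4) by (metis DiffD2 IntD2 disjnt_iff subsetD)
        qed
      qed
      moreover have "quasi_component_of Y x y" using yQ Q_def by simp
      ultimately show "z \<in> Q" unfolding Q_def using quasi_component_of_trans[of Y x y z] by simp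
    qed
    then show "\<exists>T. openin X T \<and> y \<in> T \<and> T \<subseteq> Q" using U0 by blast
  qed
  then have oY: "openin Y Q" unfolding Y_def openin_subtopology using QV by blast
  have "Q \<in> quasi_components_of Y"
    unfolding Q_def quasi_components_of_def using Vx tY by blast
  then have "Q \<in> connected_components_of Y"
    using open_quasi_eq_connected_components_of[OF oY] by blast
  then have "connectedin Y Q" by (simp add: connectedin_connected_components_of)
  then have "connectedin X Q" unfolding Y_def using connectedin_subtopology by blast
  then show "\<exists>U. openin X U \<and> connectedin X U \<and> x \<in> U \<and> U \<subseteq> V"
    using \<open>openin X Q\<close> xQ QV by blast
qed

end
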